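(* Let $n\geq 3$ be an integer and let $$\mathcal P_n=\Big\{(\kappa,\lambda)\in\mathbb R^2:\ \kappa\sin(x)+\sum_{k=2}^{n-1}\sin(kx)+\lambda\sin(nx)\geq 0\ \text{for all } x\in[0,\pi]\Big\}.$$ For every $\lambda\in\mathbb R$ there exists $\kappa_0=\kappa_0(\lambda;n)$ such that $(\kappa,\lambda)\in\mathcal P_n$ if and only if $\kappa\geq\kappa_0$. Moreover: (i) If $n$ is odd, then $\kappa_0=\frac{n+1}{2}-n\lambda$ for $\lambda\in\big(-\infty,\frac{2n-3}{4n}\big]$; $\kappa_0>\frac{n+1}{2}-n\lambda$ for $\lambda\in\big(\frac{2n-3}{4n},\frac12\big]$; and $\kappa_0>1$ for $\lambda\in\big(\frac12,\infty\big)$. (ii) If $n$ is even, then $\kappa_0>1$ for $\lambda\in\big(-\infty,\frac12\big)$, and $\kappa_0=n\lambda-\frac{n-2}{2}$ for $\lambda\in\big[\frac12,\infty\big)$. *)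

theory Defs
  imports "HOL-Analysis.Analysis"
begin

definition trig_poly_P :: "nat \<Rightarrow> (real \<times> real) set" where
  "trig_poly_P n = {(kap, lam). \<forall>x\<in>{0..pi}.
      kap * sin x + (\<Sum>k=2..n-1. sin (real k * x)) + lam * sin (real n * x) \<ge> 0}"

end

theory Submission
  imports Defs
begin



lemma mono_deriv:
  fixes f f' :: "real \<Rightarrow> real"
  assumes "x \<ge> 0" "\<And>u. (f has_real_derivative f' u) (at u)" "\<And>u. u \<ge> 0 \<Longrightarrow> f' u \<ge> 0"
  shows "f 0 \<le> f x"
  by (rule DERIV_nonneg_imp_nondecreasing[OF assms(1)]) (use assms in blast)

lemma c1: fixes x::real assumes "x \<ge> 0" shows "cos x \<ge> 1 - x^2/2"
proof -
  have "(\<lambda>x. cos x - 1 + x^2/2) 0 \<le> (\<lambda>x. cos x - 1 + x^2/2) x"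
    by (rule mono_deriv[OF assms, of _ "\<lambda>u. u - sin u"], (rule derivative_eq_intros refl | simp)+)
      (use sin_x_le_x in auto)
  then show ?thesis by simp
qed

lemma s3: fixes x::real assumes "x \<ge> 0" shows "sin x \<ge> x - x^3/6"
proof -
  have "(\<lambda>x. sin x - x + x^3/6) 0 \<le> (\<lambda>x. sin x - x + x^3/6) x"
    by (rule mono_deriv[OF assms, of _ "\<lambda>u. cos u - 1 + u^2/2"], (rule derivative_eq_intros refl | simp)+)
      (use c1 in force)
  then show ?thesis by simp
qed

lemma c4: fixes x::real assumes "x \<ge> 0" shows "cos x \<le> 1 - x^2/2 + x^4/24"
proof -
  have "(\<lambda>x. 1 - x^2/2 + x^4/24 - cos x) 0 \<le> (\<lambda>x. 1 - x^2/2 + x^4/24 - cos x) x"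
    by (rule mono_deriv[OF assms, of _ "\<lambda>u. sin u - u + u^3/6"], (rule derivative_eq_intros refl | simp)+)
      (use s3 in force)
  then show ?thesis by simp
qed

lemma s5: fixes x::real assumes "x \<ge> 0" shows "sin x \<le> x - x^3/6 + x^5/120"
proof -
  have "(\<lambda>x. x - x^3/6 + x^5/120 - sin x) 0 \<le> (\<lambda>x. x - x^3/6 + x^5/120 - sin x) x"
    by (rule mono_deriv[OF assms, of _ "\<lambda>u. 1 - u^2/2 + u^4/24 - cos u"], (rule derivative_eq_intros refl | simp)+)
      (use c4 in force)
  then show ?thesis by simp
qed

lemma c6: fixes x::real assumes "x \<ge> 0" shows "cos x \<ge> 1 - x^2/2 + x^4/24 - x^6/720"
proof -
  have "(\<lambda>x. cos x - (1 - x^2/2 + x^4/24 - x^6/720)) 0 \<le> (\<lambda>x. cos x - (1 - x^2/2 + x^4/24 - x^6/720)) x"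
    by (rule mono_deriv[OF assms, of _ "\<lambda>u. u - u^3/6 + u^5/120 - sin u"], (rule derivative_eq_intros refl | simp)+)
      (use s5 in force)
  then show ?thesis by simp
qed

lemma tanb: fixes y::real assumes "0 \<le> y" "y \<le> 3" shows "(y + y^3/3) * cos y \<le> sin y"
proof -
  have "(y + y^3/3) * cos y \<le> (y + y^3/3) * (1 - y^2/2 + y^4/24)"
    by (rule mult_left_mono[OF c4]) (use assms in auto)
  also have "\<dots> \<le> y - y^3/6"
  proof -
    have "y*y \<le> 3*3" by (rule mult_mono) (use assms in auto)
    then have "y^2 \<le> 9" by (simp add: power2_eq_square)
    then have "0 \<le> y^5 * (9 - y^2)" using assms by simp
    then show ?thesis by (simp add: algebra_simps power2_eq_square power3_eq_cube eval_nat_numeral)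
  qed
  also have "\<dots> \<le> sin y" using s3 assms by simp
  finally show ?thesis .
qed

lemma Kb: fixes p N :: real assumes p: "0 \<le> p" "p \<le> pi" and N: "N \<ge> 3"
  shows "p^3*(1 - cos p)/(12*N^2) \<le> 2*p + p*cos p - 3 * sin p"
proof -
  have nn: "0 \<le> p^3*(1 - cos p)" using p by simp
  have "108 \<le> 12*N^2" using N power_mono[OF N, of 2] by simp
  then have w: "p^3*(1 - cos p)/(12*N^2) \<le> p^3*(1 - cos p)/108"
    by (rule divide_left_mono[OF _ nn]) (use N in simp)
  show ?thesis
  proof (cases "p \<le> 29/10")
    case True
    have "p^3*(1 - cos p) \<le> p^3*(p^2/2)" by (rule mult_left_mono) (use c1[OF p(1)] p in auto)
    then have w2: "p^3*(1 - cos p)/108 \<le> p^5/216" by (simp add: eval_nat_numeral)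
    have "p * (1 - p^2/2 + p^4/24 - p^6/720) \<le> p * cos p" by (rule mult_left_mono[OF c6]) (use p in auto)
    moreover have "sin p \<le> p - p^3/6 + p^5/120" using s5 p by simp
    ultimately have K: "p^5/60 - p^7/720 \<le> 2*p + p*cos p - 3 * sin p"
      by (simp add: algebra_simps eval_nat_numeral)
    have "p*p \<le> (29/10)*(29/10)" by (rule mult_mono) (use True p in auto)
    then have "0 \<le> p^5 * (13/1080 - p^2/720)" using p by (simp add: power2_eq_square)
    then have "p^5/216 \<le> p^5/60 - p^7/720" by (simp add: algebra_simps eval_nat_numeral)
    then show ?thesis using w w2 K by linarith
  next
    case False
    have pi4: "pi \<le> 3.15" using pi_approx by simp
    have "sin p = sin (pi - p)" by simp
    also have "\<dots> \<le> pi - p" by (rule sin_x_le_x) (use p in simp)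
    finally have sp: "sin p \<le> 0.25" using False pi4 by simp
    have "-1 \<le> cos p" by simp
    then have "-p \<le> p * cos p" using p mult_left_mono[of "-1" "cos p" p] by simp
    then have K: "2 \<le> 2*p + p*cos p - 3 * sin p" using sp False by simp
    have "p^3 \<le> 4^3" by (rule power_mono) (use p pi4 in auto)
    moreover have "1 - cos p \<le> 2" by simp
    ultimately have "p^3*(1 - cos p) \<le> 4^3 * 2" by (intro mult_mono) (use p in auto)
    then have "p^3*(1 - cos p)/108 \<le> 2" by simp
    then show ?thesis using w K by linarith
  qed
qed

lemma R3: fixes t N :: real assumes t: "0 < t" "N*t \<le> pi" and N: "N \<ge> 3"
  shows "0 \<le> N * sin t + 2*N*(sin(t/2)/cos(t/2))*(1 + cos(N*t)) - 3 * sin(N*t)"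
proof -
  define p where "p = N*t"
  have p: "0 \<le> p" "p \<le> pi" using t N unfolding p_def by auto
  have "3*t \<le> N*t" using N t by (intro mult_right_mono) auto
  then have "t \<le> pi/3" using t by linarith
  then have y: "0 \<le> t/2" "t/2 \<le> pi/6" using t by auto
  have cy: "cos (t/2) > 0" by (rule cos_gt_zero) (use t y pi_gt_zero in auto)
  have "t/2 \<le> 3" using y pi_approx by simp
  from tanb[OF y(1) this] cy have tb: "t/2 + (t/2)^3/3 \<le> sin(t/2)/cos(t/2)"
    by (simp add: pos_le_divide_eq)
  have cp: "0 \<le> 1 + cos p" using cos_ge_minus_one[of p] by linarith
  have "N*(t - t^3/6) \<le> N * sin t" by (rule mult_left_mono[OF s3]) (use t N in auto)
  moreover have "2*N*(t/2 + (t/2)^3/3)*(1 + cos p) \<le> 2*N*(sin(t/2)/cos(t/2))*(1 + cos p)"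
    by (intro mult_right_mono mult_left_mono tb cp) (use N in auto)
  moreover have "N*(t - t^3/6) + 2*N*(t/2 + (t/2)^3/3)*(1 + cos p) - 3 * sin p
     = 2*p + p*cos p - 3 * sin p - p^3*(1 - cos p)/(12*N^2)"
    using N unfolding p_def by (simp add: field_simps eval_nat_numeral)
  moreover note Kb[OF p N]
  ultimately show ?thesis unfolding p_def by linarith
qed



lemma step_id: fixes x S C :: real
  assumes "S = sin (a*x)" "C = cos (a*x)"
  shows "2* sin(x/2) * (sin (a*x)/2 + sin((a+1)*x)/2) = cos(x/2) * (cos (a*x) - cos((a+1)*x))"
proof -
  define s c where "s = sin (x/2)" and "c = cos(x/2)"
  have x: "x = 2*(x/2)" by simp
  have sx: "sin x = 2* s*c" unfolding s_def c_def by (subst x, subst sin_double) simp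
  have cx: "cos x = c^2 - s^2" unfolding s_def c_def by (subst x, subst cos_double) simp
  have one: "s^2 + c^2 = 1" unfolding s_def c_def by simp
  have e1: "sin((a+1)*x) = sin(a*x)*cos x + cos(a*x)* sin x" by (simp add: distrib_right sin_add)
  have e2: "cos((a+1)*x) = cos(a*x)*cos x - sin(a*x)* sin x" by (simp add: distrib_right cos_add)
  have "2 * s*(S/2 + (S*(c^2-s^2) + C*(2* s*c))/2) = c*(C - (C*(c^2-s^2) - S*(2* s*c)))"
  proof -
    have "2 * s*(S/2 + (S*(c^2-s^2) + C*(2* s*c))/2) = s * (S*(s^2+c^2) + (S*(c^2-s^2) + C*(2* s*c)))" using one by (simp add: field_simps)
    also have "\<dots> = c*(C*(s^2+c^2) - (C*(c^2-s^2) - S*(2* s*c)))" by (simp add: algebra_simps power2_eq_square)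
    also have "\<dots> = c*(C - (C*(c^2-s^2) - S*(2* s*c)))" using one by simp
    finally show ?thesis .
  qed
  then show ?thesis using assms unfolding e1 e2 sx cx s_def[symmetric] c_def[symmetric]
    by simp
qed

lemma E_closed: fixes x :: real
  shows "2* sin(x/2) * ((\<Sum>k<n. sin(real k*x)) + sin(real n*x)/2) = cos(x/2) * (1 - cos(real n*x))"
proof (induction n)
  case 0
  then show ?case by simp
next
  case (Suc n)
  have "2* sin(x/2) * ((\<Sum>k<Suc n. sin(real k*x)) + sin(real (Suc n)*x)/2)
     = 2* sin(x/2) * ((\<Sum>k<n. sin(real k*x)) + sin(real n*x)/2) + 2* sin(x/2) * (sin (real n*x)/2 + sin((real n+1)*x)/2)"
    by (simp add: algebra_simps)
  also have "\<dots> = cos(x/2) * (1 - cos(real n*x)) + cos(x/2) * (cos (real n*x) - cos((real n+1)*x))"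
    using Suc.IH step_id[OF refl refl, where a="real n" and x=x] by simp
  also have "\<dots> = cos(x/2) * (1 - cos(real (Suc n)*x))" by (simp add: algebra_simps)
  finally show ?case .
qed



definition Ds :: "nat \<Rightarrow> (nat \<Rightarrow> real) \<Rightarrow> nat \<Rightarrow> real \<Rightarrow> real" where
  "Ds n a j x = (\<Sum>k\<in>{1..n}. a k * real k ^ j * sin (real k * x + real j * pi / 2))"

lemma Ds_deriv: "(Ds n a j has_real_derivative Ds n a (Suc j) x) (at x)"
proof -
  have "(Ds n a j has_real_derivative (\<Sum>k\<in>{1..n}. cos (real k * x + real j * pi / 2) * real k * (a k * real k ^ j))) (at x)"
    unfolding Ds_def
    by (rule derivative_eq_intros refl | simp)+
  moreover have "(\<Sum>k\<in>{1..n}. cos (real k * x + real j * pi / 2) * real k * (a k * real k ^ j)) = Ds n a (Suc j) x"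
    unfolding Ds_def
  proof (rule sum.cong[OF refl])
    fix k
    have e: "real k * x + real (Suc j) * pi / 2 = (real k * x + real j * pi / 2) + pi/2"
      by (simp add: field_simps)
    have "sin (real k * x + real (Suc j) * pi / 2) = cos (real k * x + real j * pi / 2)"
      by (simp only: e sin_add) simp
    then show "cos (real k * x + real j * pi / 2) * real k * (a k * real k ^ j) =
         a k * real k ^ Suc j * sin (real k * x + real (Suc j) * pi / 2)" by simp
  qed
  ultimately show ?thesis by simp
qed

lemma Ds_cont: "isCont (Ds n a j) x"
  unfolding Ds_def by (intro continuous_intros)

lemma Ds_ev: assumes "P (Ds n a j c)" "open {y. P y}"
  shows "\<exists>d>0. \<forall>x. dist x c < d \<longrightarrow> P (Ds n a j x)"
proof -
  have "eventually (\<lambda>x. Ds n a j x \<in> {y. P y}) (at c)"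
    by (rule topological_tendstoD[OF Ds_cont[unfolded isCont_def]]) (use assms in auto)
  then obtain d where d: "d>0" "\<forall>x. x \<noteq> c \<and> dist x c < d \<longrightarrow> P (Ds n a j x)"
    unfolding eventually_at by auto
  show ?thesis
  proof (intro exI[of _ d] conjI allI impI)
    fix x assume "dist x c < d" then show "P (Ds n a j x)" using d assms(1) by (cases "x = c") auto
  qed (use d in auto)
qed

lemma neg_left:
  assumes m: "0 < m" and z: "\<forall>j<m. Ds n a j c = 0" and s: "(-1)^m * Ds n a m c < 0" and e: "e > 0"
  shows "\<exists>x. c - e < x \<and> x < c \<and> Ds n a 0 x < 0"
proof -
  obtain d where d: "d > 0" "\<forall>x. dist x c < d \<longrightarrow> (-1)^m * Ds n a m x < 0"
  proof -
    have "open {y::real. (-1)^m * y < 0}" by (intro open_Collect_less continuous_intros)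
    then show ?thesis using Ds_ev[of "\<lambda>y. (-1)^m * y < 0", OF s] that by blast
  qed
  define x where "x = c - min d e / 2"
  have x: "c - e < x" "x < c" "c - d < x" using d e unfolding x_def by auto
  obtain t where t: "x < t" "t < c"
    "Ds n a 0 x = (\<Sum>j<m. (Ds n a j c / fact j) * (x - c)^j) + (Ds n a m t / fact m) * (x - c)^m"
    using Taylor_down[of m "\<lambda>j. Ds n a j" "Ds n a 0" x c c] m x Ds_deriv by blast
  have "(\<Sum>j<m. (Ds n a j c / fact j) * (x - c)^j) = 0" using z by simp
  moreover have "(x-c)^m = (-1)^m * (c-x)^m" using power_minus[of "c-x" m] by simp
  ultimately have "Ds n a 0 x = ((-1)^m * Ds n a m t) * ((c - x)^m / fact m)"
    using t(3) by simp
  moreover have "(-1)^m * Ds n a m t < 0" using d t x by (auto simp: dist_real_def)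
  moreover have "(c - x)^m / fact m > 0" using x by simp
  ultimately have "Ds n a 0 x < 0" by (metis mult_neg_pos)
  then show ?thesis using x by blast
qed

lemma neg_right:
  assumes m: "0 < m" and z: "\<forall>j<m. Ds n a j c = 0" and s: "Ds n a m c < 0" and e: "e > 0"
  shows "\<exists>x. c < x \<and> x < c + e \<and> Ds n a 0 x < 0"
proof -
  obtain d where d: "d > 0" "\<forall>x. dist x c < d \<longrightarrow> Ds n a m x < 0"
  proof -
    have "open {y::real. y < 0}" by (intro open_Collect_less continuous_intros)
    then show ?thesis using Ds_ev[of "\<lambda>y. y < 0", OF s] that by blast
  qed
  define x where "x = c + min d e / 2"
  have x: "x < c + e" "c < x" "x < c + d" using d e unfolding x_def by auto
  obtain t where t: "c < t" "t < x"
    "Ds n a 0 x = (\<Sum>j<m. (Ds n a j c / fact j) * (x - c)^j) + (Ds n a m t / fact m) * (x - c)^m"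
    using Taylor_up[of m "\<lambda>j. Ds n a j" "Ds n a 0" c x c] m x Ds_deriv by blast
  have "(\<Sum>j<m. (Ds n a j c / fact j) * (x - c)^j) = 0" using z by simp
  then have "Ds n a 0 x = Ds n a m t * ((x - c)^m / fact m)"
    using t(3) by simp
  moreover have "Ds n a m t < 0" using d t x by (auto simp: dist_real_def)
  moreover have "(x - c)^m / fact m > 0" using x by simp
  ultimately have "Ds n a 0 x < 0" by (metis mult_neg_pos)
  then show ?thesis using x by blast
qed



definition Ef :: "nat \<Rightarrow> real \<Rightarrow> real" where
  "Ef n x = (\<Sum>k<n. sin(real k * x)) + sin(real n * x)/2"

lemma Ef_closed: "2 * sin(x/2) * Ef n x = cos(x/2) * (1 - cos(real n*x))"
  unfolding Ef_def by (rule E_closed)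

lemma Ef_nonneg: assumes "0 \<le> x" "x \<le> pi" shows "0 \<le> Ef n x"
proof (cases "x = 0")
  case True then show ?thesis by (simp add: Ef_def)
next
  case False
  have s: "sin (x/2) > 0" by (rule sin_gt_zero) (use assms False in auto)
  have c: "cos (x/2) \<ge> 0" by (rule cos_ge_zero) (use assms in auto)
  have "0 \<le> cos(x/2) * (1 - cos(real n*x))" using c by simp
  then have "0 \<le> 2 * sin(x/2) * Ef n x" by (simp only: Ef_closed)
  then show ?thesis using s by (simp add: zero_le_mult_iff)
qed

lemma abs_sin_mult: "\<bar>sin (real k * x)\<bar> \<le> real k * \<bar>sin x\<bar>"
proof (induction k)
  case 0 then show ?case by simp
next
  case (Suc k)
  have "sin (real (Suc k) * x) = sin (real k * x) * cos x + cos (real k * x) * sin x"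
    by (simp add: distrib_right sin_add)
  then have "\<bar>sin (real (Suc k) * x)\<bar> \<le> \<bar>sin (real k * x)\<bar> * \<bar>cos x\<bar> + \<bar>cos (real k * x)\<bar> * \<bar>sin x\<bar>"
    by (metis abs_mult abs_triangle_ineq)
  also have "\<dots> \<le> \<bar>sin (real k * x)\<bar> * 1 + 1 * \<bar>sin x\<bar>"
    by (intro add_mono mult_left_mono mult_right_mono) auto
  also have "\<dots> \<le> real (Suc k) * \<bar>sin x\<bar>" using Suc.IH by (simp add: algebra_simps)
  finally show ?case .
qed

lemma sin_n_pi_minus: assumes "odd n" shows "sin (real n * (pi - t)) = sin (real n * t)"
proof -
  have "sin (real n * (pi - t)) = sin (real n * pi - real n * t)" by (simp add: algebra_simps)
  also have "\<dots> = sin (real n * t)" using assms by (simp add: sin_diff)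
  finally show ?thesis .
qed

lemma cos_n_pi_minus: assumes "odd n" shows "cos (real n * (pi - t)) = - cos (real n * t)"
proof -
  have "cos (real n * (pi - t)) = cos (real n * pi - real n * t)" by (simp add: algebra_simps)
  also have "\<dots> = - cos (real n * t)" using assms by (simp add: cos_diff)
  finally show ?thesis .
qed

lemma quad_form: fixes A B p q :: real assumes "A > 0" "A * B \<ge> 9"
  shows "0 \<le> A * p^2 - 6 * p * q + B * q^2"
proof -
  have "A * (A * p^2 - 6 * p * q + B * q^2) = (A*p - 3*q)^2 + (A*B - 9) * q^2"
    by (simp add: algebra_simps power2_eq_square)
  also have "\<dots> \<ge> 0" using assms by simp
  finally show ?thesis using assms(1) by (simp add: zero_le_mult_iff)
qed

lemma Q_nonneg: assumes n: "odd n" "n \<ge> 3" and x: "0 \<le> x" "x \<le> pi"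
  shows "0 \<le> real n * sin x + 4 * real n * Ef n x - 3 * sin (real n * x)"
proof -
  have E0: "0 \<le> Ef n x" using Ef_nonneg x by simp
  have sx: "0 \<le> sin x" using sin_ge_zero x by simp
  show ?thesis
  proof (cases "sin (real n * x) \<le> 0")
    case True
    have "0 \<le> real n * sin x" using sx by simp
    moreover have "0 \<le> 4 * real n * Ef n x" using E0 by simp
    ultimately show ?thesis using True by linarith
  next
    case False
    define t where "t = pi - x"
    have xt: "x = pi - t" unfolding t_def by simp
    have snt: "sin (real n * x) = sin (real n * t)" unfolding xt using sin_n_pi_minus n by simp
    have t0: "0 < t"
    proof (rule ccontr)
      assume "\<not> 0 < t" then have "x = pi" using x unfolding t_def by simp
      then show False using False by simp
    qed
    have x0: "0 < x"
    proof (rule ccontr)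
      assume "\<not> 0 < x" then have "x = 0" using x by simp
      then show False using False by simp
    qed
    have tpi: "t \<le> pi" using x unfolding t_def by simp
    have notmid: "\<not> (pi \<le> real n * t \<and> real n * t \<le> 2 * pi)"
    proof
      assume h: "pi \<le> real n * t \<and> real n * t \<le> 2 * pi"
      have "0 \<le> sin (real n * t - pi)" by (rule sin_ge_zero) (use h in auto)
      then have "sin (real n * t) \<le> 0" by (simp add: sin_diff)
      then show False using False snt by simp
    qed
    show ?thesis
    proof (cases "real n * t < pi")
      case True
      have R: "0 \<le> real n * sin t + 2 * real n * (sin(t/2)/cos(t/2)) * (1 + cos(real n * t)) - 3 * sin(real n * t)"
        by (rule R3) (use t0 True n in auto)
      have "3*t \<le> real n * t" using n t0 by (intro mult_right_mono) auto
      then have "t < pi" using True t0 by linarith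
      then have ct: "cos (t/2) > 0" by (intro cos_gt_zero) (use t0 in auto)
      have h1: "sin (x/2) = cos (t/2)" unfolding xt by (simp add: cos_sin_eq diff_divide_distrib)
      have h2: "cos (x/2) = sin (t/2)" unfolding xt by (simp add: sin_cos_eq diff_divide_distrib)
      have h3: "cos (real n * x) = - cos (real n * t)" unfolding xt using cos_n_pi_minus n by simp
      have eq: "2 * cos(t/2) * Ef n x = sin(t/2) * (1 + cos(real n * t))"
        using Ef_closed[of x n] h1 h2 h3 by simp
      have "4*real n*Ef n x = 2*real n*(2*cos(t/2)*Ef n x)/cos(t/2)" using ct by (simp add: field_simps)
      also have "\<dots> = 2*real n*(sin(t/2)*(1+cos(real n*t)))/cos(t/2)" by (simp only: eq)
      also have "\<dots> = 2 * real n * (sin(t/2)/cos(t/2)) * (1 + cos(real n * t))" by simp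
      finally have "4 * real n * Ef n x = 2 * real n * (sin(t/2)/cos(t/2)) * (1 + cos(real n * t))" .
      moreover have "sin x = sin t" unfolding xt by simp
      ultimately show ?thesis using R snt by simp
    next
      case False
      then have big: "2 * pi < real n * t" using notmid by simp
      define s c where "s = sin (x/2)" and "c = cos (x/2)"
      have s0: "s > 0" unfolding s_def by (rule sin_gt_zero) (use x x0 in auto)
      have h2: "c = sin (t/2)" unfolding c_def xt by (simp add: sin_cos_eq diff_divide_distrib)
      have N3: "real n \<ge> 3" using n by simp
      have u: "pi / real n \<le> t/2" using big N3 by (simp add: field_simps)
      have u2: "pi / real n \<le> pi / 3" by (rule divide_left_mono) (use N3 in auto)
      have pos: "0 < pi / real n" using N3 by simp
      have "sin (pi / real n) \<le> sin (t/2)"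
        by (rule sin_monotone_2pi_le) (use u tpi pos in linarith)+
      moreover have "pi/real n - (pi/real n)^3/6 \<le> sin (pi / real n)"
        by (rule s3) (use N3 in simp)
      moreover have "(pi/real n)/2 \<le> pi/real n - (pi/real n)^3/6"
      proof -
        have "(pi/real n)^2 \<le> (pi/3)^2" by (rule power_mono[OF u2]) (use N3 in simp)
        also have "\<dots> \<le> 3"
        proof -
          have "pi*pi \<le> 4*4" by (rule mult_mono) (use pi_less_4 in auto)
          then show ?thesis by (simp add: power2_eq_square)
        qed
        finally have "(pi/real n)^2 \<le> 3" .
        then have "0 \<le> (pi/real n) * (3 - (pi/real n)^2)" using N3 by simp
        then show ?thesis by (simp add: algebra_simps power2_eq_square power3_eq_cube)
      qed
      ultimately have cge: "pi / (2 * real n) \<le> c" using h2 by simp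
      have c0: "0 \<le> c" using cge N3 by (smt (verit) divide_nonneg_pos pi_gt_zero)
      have "(pi / (2 * real n))^2 \<le> c^2" by (rule power_mono[OF cge]) (use N3 in simp)
      then have "8 * real n^2 * (pi / (2 * real n))^2 \<le> 8 * real n^2 * c^2"
        by (rule mult_left_mono) simp
      moreover have "8 * real n^2 * (pi / (2 * real n))^2 = 2 * pi^2" using N3 by (simp add: field_simps power2_eq_square)
      moreover have "2 * pi^2 \<ge> 9" using pi_gt3 power_mono[of 3 pi 2] by simp
      ultimately have c9: "9 \<le> 8 * real n^2 * c^2" by linarith
      define A B where "A = 2*real n* s*c + 4*real n*c/s" and "B = 2*real n* s*c"
      have "A * B = 4*real n^2* s^2*c^2 + 8*real n^2*c^2" unfolding A_def B_def using s0
        by (simp add: field_simps power2_eq_square)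
      moreover have "0 \<le> 4*real n^2* s^2*c^2" by simp
      ultimately have AB: "9 \<le> A * B" using c9 by linarith
      have "c > 0" using c9 c0 by (cases "c = 0") auto
      then have A0: "A > 0" unfolding A_def using s0 N3 by (simp add: add_pos_pos)
      define p q where "p = sin (real n * x / 2)" and "q = cos (real n * x / 2)"
      have nx: "real n * x = 2 * (real n * x / 2)" by simp
      have e1: "sin (real n * x) = 2 * p * q" unfolding p_def q_def by (subst nx, subst sin_double) simp
      have e2: "cos (real n * x) = 1 - 2 * p^2" unfolding p_def by (subst nx, subst cos_double_sin) simp
      have pq: "p^2 + q^2 = 1" unfolding p_def q_def by simp
      have xx: "x = 2 * (x/2)" by simp
      have e3: "sin x = 2 * s * c" unfolding s_def c_def by (subst xx, subst sin_double) simp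
      have "2 * s * Ef n x = c * (2 * p^2)" using Ef_closed[of x n] e2 unfolding s_def c_def by simp
      then have e4: "Ef n x = c * p^2 / s" using s0 by (simp add: field_simps)
      have "real n * sin x + 4 * real n * Ef n x - 3 * sin (real n * x) = A * p^2 - 6 * p * q + B * q^2"
      proof -
        have "B*p^2 + B*q^2 = B*(p^2+q^2)" by (simp add: algebra_simps)
        then have Bq: "real n * (2 * s * c) = B*p^2 + B*q^2" using pq by (simp add: B_def)
        have AB': "A = B + 4*real n*c/s" by (simp add: A_def B_def)
        show ?thesis unfolding e1 e3 e4 Bq AB' using s0 by (simp add: field_simps)
      qed
      then show ?thesis using quad_form[OF A0 AB] by simp
    qed
  qed
qed


definition F :: "nat \<Rightarrow> real \<Rightarrow> real \<Rightarrow> real" where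
  "F n lam x = (\<Sum>k=2..n-1. sin(real k * x)) + lam * sin(real n * x)"

lemma memP: "(kap, lam) \<in> trig_poly_P n \<longleftrightarrow> (\<forall>x\<in>{0..pi}. 0 \<le> kap * sin x + F n lam x)"
  unfolding trig_poly_P_def F_def by (simp add: add.assoc)

definition kap0 :: "nat \<Rightarrow> real \<Rightarrow> real" where
  "kap0 n lam = Sup ((\<lambda>x. - F n lam x / sin x) ` {0<..<pi})"

lemma F_bound: "\<bar>F n lam x\<bar> \<le> ((\<Sum>k=2..n-1. real k) + \<bar>lam\<bar> * real n) * \<bar>sin x\<bar>"
proof -
  have "\<bar>\<Sum>k=2..n-1. sin(real k * x)\<bar> \<le> (\<Sum>k=2..n-1. \<bar>sin(real k * x)\<bar>)" by (rule sum_abs)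
  also have "\<dots> \<le> (\<Sum>k=2..n-1. real k * \<bar>sin x\<bar>)" by (rule sum_mono) (rule abs_sin_mult)
  also have "\<dots> = (\<Sum>k=2..n-1. real k) * \<bar>sin x\<bar>" by (simp add: sum_distrib_right)
  finally have 1: "\<bar>\<Sum>k=2..n-1. sin(real k * x)\<bar> \<le> (\<Sum>k=2..n-1. real k) * \<bar>sin x\<bar>" .
  have "\<bar>lam * sin(real n * x)\<bar> \<le> \<bar>lam\<bar> * (real n * \<bar>sin x\<bar>)"
    unfolding abs_mult by (rule mult_left_mono[OF abs_sin_mult]) simp
  with 1 show ?thesis unfolding F_def by (simp add: algebra_simps) (smt (verit))
qed

lemma bddS: "bdd_above ((\<lambda>x. - F n lam x / sin x) ` {0<..<pi})"
proof (rule bdd_aboveI2)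
  fix x assume x: "x \<in> {0<..<pi}"
  then have s: "sin x > 0" by (intro sin_gt_zero) auto
  have "- F n lam x \<le> ((\<Sum>k=2..n-1. real k) + \<bar>lam\<bar> * real n) * sin x"
    using F_bound[of n lam x] s by simp
  then show "- F n lam x / sin x \<le> (\<Sum>k=2..n-1. real k) + \<bar>lam\<bar> * real n"
    using pos_divide_le_eq[OF s, of "- F n lam x"] by simp
qed

lemma F_ends: "F n lam 0 = 0" "F n lam pi = 0"
  unfolding F_def by simp_all

lemma charP: "(kap, lam) \<in> trig_poly_P n \<longleftrightarrow> kap0 n lam \<le> kap"
proof
  assume h: "(kap, lam) \<in> trig_poly_P n"
  show "kap0 n lam \<le> kap" unfolding kap0_def
  proof (rule cSup_least)
    have "pi/2 \<in> {0<..<pi}" using pi_gt_zero by simp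
    then show "(\<lambda>x. - F n lam x / sin x) ` {0<..<pi} \<noteq> {}" by blast
  next
    fix y assume "y \<in> (\<lambda>x. - F n lam x / sin x) ` {0<..<pi}"
    then obtain x where x: "x \<in> {0<..<pi}" "y = - F n lam x / sin x" by auto
    then have s: "sin x > 0" by (intro sin_gt_zero) auto
    have "0 \<le> kap * sin x + F n lam x" using h x unfolding memP by auto
    then show "y \<le> kap" using x(2) pos_divide_le_eq[OF s, of "- F n lam x" kap] by simp
  qed
next
  assume h: "kap0 n lam \<le> kap"
  show "(kap, lam) \<in> trig_poly_P n" unfolding memP
  proof
    fix x assume x: "x \<in> {0..pi}"
    show "0 \<le> kap * sin x + F n lam x"
    proof (cases "x = 0 \<or> x = pi")
      case True then show ?thesis using F_ends by auto
    next
      case False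
      then have x': "x \<in> {0<..<pi}" using x by auto
      then have s: "sin x > 0" by (intro sin_gt_zero) auto
      have "- F n lam x / sin x \<le> kap0 n lam" unfolding kap0_def
        by (rule cSup_upper[OF _ bddS]) (use x' in auto)
      then have "- F n lam x / sin x \<le> kap" using h by simp
      then show ?thesis using pos_divide_le_eq[OF s, of "- F n lam x" kap] by simp
    qed
  qed
qed

lemma lowerP: assumes "\<And>kap. kap < c \<Longrightarrow> (kap, lam) \<notin> trig_poly_P n" shows "c \<le> kap0 n lam"
  using assms[of "kap0 n lam"] charP by force

lemma strictP: assumes "(c, lam) \<notin> trig_poly_P n" shows "c < kap0 n lam"
  using assms charP by force

lemma upperP: assumes "(c, lam) \<in> trig_poly_P n" shows "kap0 n lam \<le> c"
  using assms charP by force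

definition cf :: "nat \<Rightarrow> real \<Rightarrow> real \<Rightarrow> nat \<Rightarrow> real" where
  "cf n kap lam k = (if k = 1 then kap else if k = n then lam else 1)"

lemma split_cf: assumes "n \<ge> 3"
  shows "(\<Sum>k\<in>{1..n}. cf n kap lam k * g k) = kap * g 1 + (\<Sum>k=2..n-1. g k) + lam * g n"
proof -
  have e: "{1..n} = insert 1 (insert n {2..n-1})" using assms by auto
  have "(\<Sum>k=2..n-1. cf n kap lam k * g k) = (\<Sum>k=2..n-1. g k)"
    by (rule sum.cong) (auto simp: cf_def)
  then show ?thesis unfolding e using assms by (simp add: cf_def)
qed

lemma T_Ds: assumes "n \<ge> 3" shows "kap * sin x + F n lam x = Ds n (cf n kap lam) 0 x"
  unfolding Ds_def F_def using split_cf[OF assms, of kap lam "\<lambda>k. sin (real k * x)"] by simp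

lemma notP: assumes "n \<ge> 3" "0 \<le> x" "x \<le> pi" "Ds n (cf n kap lam) 0 x < 0"
  shows "(kap, lam) \<notin> trig_poly_P n"
  using assms T_Ds[OF assms(1), of kap x lam] unfolding memP by force

lemma sin32: "sin (3 * pi / 2) = -1"
proof -
  have e: "3 * pi / 2 = pi + pi/2" by simp
  have a: "sin (pi + pi/2) = -1" by (simp only: sin_add) simp
  show ?thesis by (simp only: e a)
qed

lemma sinv0: "sin (real k * pi + real (0::nat) * pi / 2) = 0" by simp
lemma sinv1: "sin (real k * pi + real (1::nat) * pi / 2) = (-1)^k" by (simp add: sin_add)
lemma sinv2: "sin (real k * pi + real (2::nat) * pi / 2) = 0" by (simp add: sin_add)
lemma sinv3: "sin (real k * pi + real (3::nat) * pi / 2) = - ((-1)^k)"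
  using sin32 by (simp add: sin_add)

lemma Ds_pi0: "Ds n a 0 pi = 0" unfolding Ds_def by simp
lemma Ds_pi2: "Ds n a 2 pi = 0" unfolding Ds_def using sinv2 by simp
lemma Ds_pi1: "Ds n a 1 pi = (\<Sum>k\<in>{1..n}. a k * ((-1)^k * real k))"
  unfolding Ds_def using sinv1 by (simp add: mult_ac)
lemma Ds_pi3: "Ds n a 3 pi = - (\<Sum>k\<in>{1..n}. a k * ((-1)^k * real k ^ 3))"
  unfolding Ds_def using sinv3 by (simp add: mult_ac sum_negf[symmetric])

lemma sum_2_conv: fixes n :: nat assumes "2 \<le> n" shows "(\<Sum>k=2..n-1. f k) = (\<Sum>k<n. f k) - f 0 - (f 1 :: real)"
proof -
  have "{..<n} = insert 0 (insert 1 {2..n-1})" using assms by auto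
  then show ?thesis by simp
qed

lemma L1e: "(\<Sum>k<2*p. (-1)^k * real k) = - real p"
  by (induction p) (auto simp: algebra_simps)
lemma L1o: "(\<Sum>k<2*p+1. (-1)^k * real k) = real p"
  using L1e[of p] by simp
lemma L3e: "(\<Sum>k<2*p. (-1)^k * real k ^ 3) = real p^2 * (3 - 4 * real p)"
  by (induction p) (auto simp: algebra_simps power2_eq_square power3_eq_cube)
lemma L3o: "(\<Sum>k<2*p+1. (-1)^k * real k ^ 3) = 4 * real p^3 + 3 * real p^2"
  using L3e[of p] by (simp add: algebra_simps power2_eq_square power3_eq_cube)


lemma low_pi: assumes n: "n \<ge> 3"
  shows "(\<Sum>k=2..n-1. (-1)^k * real k) + lam * ((-1)^n * real n) \<le> kap0 n lam"
proof (rule lowerP)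
  fix kap assume kap: "kap < (\<Sum>k=2..n-1. (-1)^k * real k) + lam * ((-1)^n * real n)"
  define a where "a = cf n kap lam"
  have D1: "Ds n a 1 pi = - kap + (\<Sum>k=2..n-1. (-1)^k * real k) + lam * ((-1)^n * real n)"
    unfolding a_def Ds_pi1 split_cf[OF n] by simp
  have "\<exists>x. pi - pi < x \<and> x < pi \<and> Ds n a 0 x < 0"
    by (rule neg_left) (use D1 kap Ds_pi0 pi_gt_zero in auto)
  then obtain x where "0 < x" "x < pi" "Ds n a 0 x < 0" by auto
  then show "(kap, lam) \<notin> trig_poly_P n" unfolding a_def by (intro notP[OF n]) auto
qed

lemma A1_odd: assumes "odd n" "n \<ge> 3" shows "(\<Sum>k=2..n-1. (-1)^k * real k) = (real n + 1) / 2"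
proof -
  obtain p where p: "n = 2*p+1" using assms(1) oddE by blast
  have "(\<Sum>k=2..n-1. (-1)^k * real k) = (\<Sum>k<n. (-1)^k * real k) - 0 - (-1)"
    using sum_2_conv[of n "\<lambda>k. (-1)^k * real k"] assms by simp
  also have "\<dots> = real p + 1" unfolding p L1o by simp
  finally show ?thesis using p by simp
qed

lemma A1_even: assumes "even n" "n \<ge> 3" shows "(\<Sum>k=2..n-1. (-1)^k * real k) = - (real n - 2) / 2"
proof -
  obtain p where p: "n = 2*p" using assms(1) evenE by blast
  have "(\<Sum>k=2..n-1. (-1)^k * real k) = (\<Sum>k<n. (-1)^k * real k) - 0 - (-1)"
    using sum_2_conv[of n "\<lambda>k. (-1)^k * real k"] assms by simp
  also have "\<dots> = 1 - real p" unfolding p L1e by simp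
  finally show ?thesis using p by simp
qed

lemma Ef_expand: assumes "n \<ge> 3"
  shows "Ef n x = sin x + (\<Sum>k=2..n-1. sin(real k * x)) + sin(real n * x)/2"
  unfolding Ef_def using sum_2_conv[of n "\<lambda>k. sin(real k * x)"] assms by simp

lemma g_eq: assumes "n \<ge> 3" shows "Ds n (cf n 1 lam) 0 x = Ef n x + (lam - 1/2) * sin(real n * x)"
  using T_Ds[OF assms, of 1 x lam] Ef_expand[OF assms, of x] unfolding F_def by (simp add: algebra_simps)

lemma x0_notP: assumes n: "n \<ge> 3" and lam: "lam \<noteq> 1/2" shows "(1, lam) \<notin> trig_poly_P n"
proof -
  define a where "a = cf n 1 lam"
  define x0 where "x0 = 2 * pi / real n"
  have N: "real n \<ge> 3" using n by simp
  have x0p: "0 < x0" unfolding x0_def using N by simp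
  have "x0 \<le> 2 * pi / 3" unfolding x0_def by (rule divide_left_mono) (use N in auto)
  then have x0pi: "x0 < pi" using pi_gt_zero by linarith
  have nx0: "real n * x0 = 2 * pi" unfolding x0_def using N by simp
  have sx: "sin (x0/2) > 0" by (rule sin_gt_zero) (use x0p x0pi in auto)
  have "2 * sin (x0/2) * Ef n x0 = 0" unfolding Ef_closed nx0 by simp
  then have E0: "Ef n x0 = 0" using sx by simp
  have geq: "Ef n = (\<lambda>x. Ds n a 0 x - (lam - 1/2) * sin(real n * x))"
    unfolding a_def using g_eq[OF n] by (auto simp: fun_eq_iff)
  have ds: "((\<lambda>x. sin(real n * x)) has_real_derivative cos (real n * x0) * real n) (at x0)"
    by (rule derivative_eq_intros refl | simp)+
  have "((\<lambda>x. Ds n a 0 x - (lam - 1/2) * sin(real n * x)) has_real_derivative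
          Ds n a 1 x0 - (lam - 1/2) * (cos (real n * x0) * real n)) (at x0)"
    using DERIV_diff[OF Ds_deriv[of n a 0 x0] DERIV_cmult[OF ds, of "lam - 1/2"]] by simp
  then have dE: "(Ef n has_real_derivative Ds n a 1 x0 - (lam - 1/2) * real n) (at x0)"
    unfolding geq nx0 by simp
  have "Ds n a 1 x0 - (lam - 1/2) * real n = 0"
  proof (rule DERIV_local_min[OF dE])
    show "0 < min x0 (pi - x0)" using x0p x0pi by simp
    show "\<forall>y. \<bar>x0 - y\<bar> < min x0 (pi - x0) \<longrightarrow> Ef n x0 \<le> Ef n y"
      using E0 Ef_nonneg by (auto simp: abs_less_iff)
  qed
  then have D1: "Ds n a 1 x0 = (lam - 1/2) * real n" by simp
  have D0: "Ds n a 0 x0 = 0" using g_eq[OF n, of lam x0] E0 nx0 unfolding a_def by simp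
  show ?thesis
  proof (cases "lam > 1/2")
    case True
    have "\<exists>x. x0 - x0 < x \<and> x < x0 \<and> Ds n a 0 x < 0"
      by (rule neg_left) (use D0 D1 True N x0p in auto)
    then obtain x where "0 < x" "x < x0" "Ds n a 0 x < 0" by auto
    then show ?thesis unfolding a_def using x0pi by (intro notP[OF n]) auto
  next
    case False
    then have l: "lam < 1/2" using lam by simp
    have "(lam - 1/2) * real n < 0" using l N by (simp add: mult_neg_pos)
    then have "\<exists>x. x0 < x \<and> x < x0 + (pi - x0) \<and> Ds n a 0 x < 0"
      by (intro neg_right) (use D0 D1 x0pi in auto)
    then obtain x where "x0 < x" "x < pi" "Ds n a 0 x < 0" by auto
    then show ?thesis unfolding a_def using x0p by (intro notP[OF n]) auto
  qed
qed

lemma sin_n_le: assumes "0 \<le> x" "x \<le> pi" shows "\<bar>sin (real n * x)\<bar> \<le> real n * sin x"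
  using abs_sin_mult[of n x] sin_ge_zero[OF assms] by simp

lemma odd_c_mem: assumes n: "odd n" "n \<ge> 3" and lam: "lam \<le> (2 * real n - 3) / (4 * real n)"
  shows "((real n + 1) / 2 - real n * lam, lam) \<in> trig_poly_P n"
  unfolding memP
proof
  fix x :: real assume x: "x \<in> {0..pi}"
  have N: "real n \<ge> 3" using n by simp
  have id: "((real n + 1) / 2 - real n * lam) * sin x + F n lam x =
     (real n * sin x + 4 * real n * Ef n x - 3 * sin(real n * x)) / (4 * real n)
     + ((2 * real n - 3) / (4 * real n) - lam) * (real n * sin x - sin(real n * x))"
    unfolding F_def Ef_expand[OF n(2)] using N by (simp add: field_simps)
  have "0 \<le> (real n * sin x + 4 * real n * Ef n x - 3 * sin(real n * x)) / (4 * real n)"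
    using Q_nonneg[OF n, of x] x by simp
  moreover have "0 \<le> ((2 * real n - 3) / (4 * real n) - lam) * (real n * sin x - sin(real n * x))"
    using lam sin_n_le[of x n] x by (intro mult_nonneg_nonneg) auto
  ultimately show "0 \<le> ((real n + 1) / 2 - real n * lam) * sin x + F n lam x" unfolding id by simp
qed

lemma even_c_mem: assumes n: "n \<ge> 3" and lam: "lam \<ge> 1/2"
  shows "(real n * lam - (real n - 2) / 2, lam) \<in> trig_poly_P n"
  unfolding memP
proof
  fix x :: real assume x: "x \<in> {0..pi}"
  have id: "(real n * lam - (real n - 2) / 2) * sin x + F n lam x =
     (lam - 1/2) * (real n * sin x + sin(real n * x)) + Ef n x"
    unfolding F_def Ef_expand[OF n] by (simp add: field_simps)
  have "0 \<le> (lam - 1/2) * (real n * sin x + sin(real n * x))"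
    using lam sin_n_le[of x n] x by (intro mult_nonneg_nonneg) auto
  moreover have "0 \<le> Ef n x" using Ef_nonneg x by auto
  ultimately show "0 \<le> (real n * lam - (real n - 2) / 2) * sin x + F n lam x" unfolding id by simp
qed

lemma odd_strict: assumes n: "odd n" "n \<ge> 3" and lam: "(2 * real n - 3) / (4 * real n) < lam"
  shows "((real n + 1) / 2 - real n * lam, lam) \<notin> trig_poly_P n"
proof -
  obtain p where p: "n = 2*p+1" using n(1) oddE by blast
  define c where "c = (real n + 1) / 2 - real n * lam"
  define a where "a = cf n c lam"
  have N: "real n \<ge> 3" using n by simp
  have mn: "(-1::real)^n = -1" using n(1) by simp
  have A1: "(\<Sum>k=2..n-1. (-1)^k * real k) = (real n + 1) / 2" by (rule A1_odd[OF n])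
  have A3: "(\<Sum>k=2..n-1. (-1)^k * real k ^ 3) = 4 * real p^3 + 3 * real p^2 + 1"
  proof -
    have "(\<Sum>k=2..n-1. (-1)^k * real k ^ 3) = (\<Sum>k<n. (-1)^k * real k ^ 3) - 0 - (-1)"
      using sum_2_conv[of n "\<lambda>k. (-1)^k * real k ^ 3"] n by simp
    also have "\<dots> = 4 * real p^3 + 3 * real p^2 + 1" unfolding p L3o by simp
    finally show ?thesis .
  qed
  have D1: "Ds n a 1 pi = 0"
    unfolding a_def Ds_pi1 split_cf[OF n(2)] A1 mn c_def by simp
  have D3: "Ds n a 3 pi = c - (4 * real p^3 + 3 * real p^2 + 1) + lam * real n ^ 3"
    unfolding a_def Ds_pi3 split_cf[OF n(2)] A3 mn by simp
  have pos: "0 < real n ^ 3 - real n"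
  proof -
    have "0 < real n * (real n - 1) * (real n + 1)" using N by (intro mult_pos_pos) auto
    then show ?thesis by (simp add: algebra_simps power3_eq_cube)
  qed
  have h1: "(2 * real n - 3) / (4 * real n) * (real n ^ 3 - real n) < lam * (real n ^ 3 - real n)"
    by (rule mult_strict_right_mono[OF lam pos])
  have h2:  "(2 * real n - 3) / (4 * real n) * (real n ^ 3 - real n) = (2 * real n - 3) * (real n ^ 2 - 1) / 4"
    using N by (simp add: field_simps power2_eq_square power3_eq_cube)
  have h3: "(2 * real n - 3) * (real n ^ 2 - 1) = 4 * (4 * real p^3 + 3 * real p^2 - real p)"
    unfolding p by (simp add: algebra_simps power2_eq_square power3_eq_cube)
  have "(2 * real n - 3) / (4 * real n) * (real n ^ 3 - real n) = 4 * real p^3 + 3 * real p^2 - real p"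
    unfolding h2 h3 by simp
  then have Y: "4 * real p^3 + 3 * real p^2 - real p < lam * (real n ^ 3 - real n)" using h1 by simp
  have cval: "c = real p + 1 - real n * lam" unfolding c_def p by (simp add: field_simps)
  have "Ds n a 3 pi = lam * (real n ^ 3 - real n) - (4 * real p^3 + 3 * real p^2 - real p)"
    unfolding D3 cval by (simp add: algebra_simps)
  then have "0 < Ds n a 3 pi" using Y by linarith
  then have "\<exists>x. pi - pi < x \<and> x < pi \<and> Ds n a 0 x < 0"
  proof -
    have z: "\<forall>j<3. Ds n a j pi = 0"
    proof (intro allI impI)
      fix j :: nat assume "j < 3"
      then have "j = 0 \<or> j = 1 \<or> j = 2" by auto
      then show "Ds n a j pi = 0" using Ds_pi0 D1 Ds_pi2 by auto
    qed
    show ?thesis by (rule neg_left[OF _ z]) (use \<open>0 < Ds n a 3 pi\<close> pi_gt_zero in auto)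
  qed
  then obtain x where "0 < x" "x < pi" "Ds n a 0 x < 0" by auto
  then show ?thesis unfolding a_def c_def by (intro notP[OF n(2)]) auto
qed

theorem theorem4:
  fixes n :: nat
  assumes "n \<ge> 3"
  shows "\<forall>lam::real. \<exists>kap0::real.
    (\<forall>kap. (kap, lam) \<in> trig_poly_P n \<longleftrightarrow> kap \<ge> kap0) \<and>
    (odd n \<longrightarrow>
       (lam \<le> (2 * real n - 3) / (4 * real n) \<longrightarrow> kap0 = (real n + 1) / 2 - real n * lam) \<and>
       ((2 * real n - 3) / (4 * real n) < lam \<and> lam \<le> 1/2 \<longrightarrow> kap0 > (real n + 1) / 2 - real n * lam) \<and>
       (lam > 1/2 \<longrightarrow> kap0 > 1)) \<and>
    (even n \<longrightarrow>
       (lam < 1/2 \<longrightarrow> kap0 > 1) \<and>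
       (lam \<ge> 1/2 \<longrightarrow> kap0 = real n * lam - (real n - 2) / 2))"
proof
  fix lam :: real
  show "\<exists>kap0::real.
    (\<forall>kap. (kap, lam) \<in> trig_poly_P n \<longleftrightarrow> kap \<ge> kap0) \<and>
    (odd n \<longrightarrow>
       (lam \<le> (2 * real n - 3) / (4 * real n) \<longrightarrow> kap0 = (real n + 1) / 2 - real n * lam) \<and>
       ((2 * real n - 3) / (4 * real n) < lam \<and> lam \<le> 1/2 \<longrightarrow> kap0 > (real n + 1) / 2 - real n * lam) \<and>
       (lam > 1/2 \<longrightarrow> kap0 > 1)) \<and>
    (even n \<longrightarrow>
       (lam < 1/2 \<longrightarrow> kap0 > 1) \<and>
       (lam \<ge> 1/2 \<longrightarrow> kap0 = real n * lam - (real n - 2) / 2))"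
  proof (intro exI[of _ "kap0 n lam"] conjI impI allI)
    fix kap show "(kap, lam) \<in> trig_poly_P n \<longleftrightarrow> kap0 n lam \<le> kap" by (rule charP)
  next
    assume o: "odd n" and l: "lam \<le> (2 * real n - 3) / (4 * real n)"
    have "kap0 n lam \<le> (real n + 1) / 2 - real n * lam" by (rule upperP[OF odd_c_mem[OF o assms l]])
    moreover have "(real n + 1) / 2 - real n * lam \<le> kap0 n lam"
    proof -
      have "(-1::real)^n = -1" using o by simp
      then have L: "(\<Sum>k=2..n-1. (-1)^k * real k) - lam * real n \<le> kap0 n lam"
        using low_pi[OF assms, of lam] by simp
      moreover have "lam * real n = real n * lam" by simp
      ultimately show ?thesis using A1_odd[OF o assms] by linarith
    qed
    ultimately show "kap0 n lam = (real n + 1) / 2 - real n * lam" by simp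
  next
    assume o: "odd n" and l: "(2 * real n - 3) / (4 * real n) < lam \<and> lam \<le> 1/2"
    show "(real n + 1) / 2 - real n * lam < kap0 n lam"
      by (rule strictP[OF odd_strict[OF o assms]]) (use l in simp)
  next
    assume "lam > 1/2" then show "1 < kap0 n lam" by (intro strictP x0_notP assms) simp
  next
    assume "lam < 1/2" then show "1 < kap0 n lam" by (intro strictP x0_notP assms) simp
  next
    assume e: "even n" and l: "lam \<ge> 1/2"
    have "kap0 n lam \<le> real n * lam - (real n - 2) / 2" by (rule upperP[OF even_c_mem[OF assms l]])
    moreover have "real n * lam - (real n - 2) / 2 \<le> kap0 n lam"
    proof -
      have "(-1::real)^n = 1" using e by simp
      then have L: "(\<Sum>k=2..n-1. (-1)^k * real k) + lam * real n \<le> kap0 n lam"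
        using low_pi[OF assms, of lam] by simp
      moreover have "lam * real n = real n * lam" by simp
      ultimately show ?thesis using A1_even[OF e assms] by linarith
    qed
    ultimately show "kap0 n lam = real n * lam - (real n - 2) / 2" by simp
  qed
qed

end
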